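(* Let $q$ be a power of an odd prime, $n>3$ an odd integer with $\gcd(n,q-1)=1$, $\delta\in\mathbb{F}_{q^n}^*$ with $\delta\neq1$ and multiplicative order of $\delta$ dividing $q-1$, and $0<r<n$ an integer with $\gcd(r,n)=1$. Then $S(x)=x^q+\delta x^{q^{2r+1}}$ is an exceptional scattered polynomial of index $r+1$ over $\mathbb{F}_{q^n}$.
   Context: For a polynomial $S$ with coefficients in $\mathbb{F}_{q^n}$, a positive integer $m$ and a nonnegative integer $t$, $S$ is scattered of index $t$ over $\mathbb{F}_{q^{mn}}$ if for all $y,z\in\mathbb{F}_{q^{mn}}^*$, $\frac{S(y)}{y^{q^t}}=\frac{S(z)}{z^{q^t}}$ implies $y/z\in\mathbb{F}_q$. $S$ is exceptional scattered of index $t$ (over $\mathbb{F}_{q^n}$) if there are infinitely many $m\in\mathbb{N}$ such that $S$ is scattered of index $t$ over $\mathbb{F}_{q^{mn}}$. *)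

theory Defs
  imports "HOL-Computational_Algebra.Polynomial"
begin

text \<open>We work inside an algebraically closed field K of characteristic p.
  For q a power of p, the finite field with q^k elements is realised inside K
  as the set of roots of X^(q^k) - X.\<close>

definition Fq :: "nat \<Rightarrow> nat \<Rightarrow> 'a::field set" where
  "Fq q k = {x. x ^ (q ^ k) = x}"

definition scattered_over :: "nat \<Rightarrow> nat \<Rightarrow> ('a::field \<Rightarrow> 'a) \<Rightarrow> nat \<Rightarrow> bool" where
  "scattered_over q t S N \<longleftrightarrow>
     (\<forall>y \<in> Fq q N - {0}. \<forall>z \<in> Fq q N - {0}.
        S y / y ^ (q ^ t) = S z / z ^ (q ^ t) \<longrightarrow> y / z \<in> Fq q 1)"

definition exceptional_scattered :: "nat \<Rightarrow> nat \<Rightarrow> nat \<Rightarrow> ('a::field \<Rightarrow> 'a) \<Rightarrow> bool" where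
  "exceptional_scattered q n t S \<longleftrightarrow> infinite {m::nat. m > 0 \<and> scattered_over q t S (m * n)}"

end

theory Submission
  imports Defs "HOL-Computational_Algebra.Primes"
begin

lemma frob_add:
  fixes x y :: "'a::field"
  assumes "prime CHAR('a)" "q = CHAR('a) ^ k"
  shows "(x + y) ^ (q ^ j) = x ^ (q ^ j) + y ^ (q ^ j)"
  using freshmans_dream'[OF assms(1), of "q^j" "k*j"] assms(2) by (simp add: power_mult)

lemma frob_diff:
  fixes x y :: "'a::field"
  assumes "prime CHAR('a)" "q = CHAR('a) ^ k"
  shows "(x - y) ^ (q ^ j) = x ^ (q ^ j) - y ^ (q ^ j)"
  using frob_add[OF assms, of "x - y" y j] by (simp add: algebra_simps)

lemma iter_fix:
  fixes x :: "'a::field"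
  assumes "x ^ (q ^ a) = x"
  shows "x ^ (q ^ (a * i)) = x"
proof (induction i)
  case (Suc i)
  have e: "q ^ (a * Suc i) = q ^ (a * i) * q ^ a"
    by (simp add: power_add)
  have "x ^ (q ^ (a * Suc i)) = (x ^ (q ^ (a * i))) ^ (q ^ a)"
    unfolding e by (rule power_mult)
  then show ?case using Suc assms by simp
qed simp

lemma coprime_fix:
  fixes x :: "'a::field"
  assumes "x ^ (q ^ a) = x" "x ^ (q ^ b) = x" "coprime a b"
  shows "x ^ q = x"
proof (cases "a = 0")
  case True
  then have "b = 1" using assms(3) by simp
  then show ?thesis using assms(2) by simp
next
  case False
  then obtain i j where ij: "a * i = b * j + gcd a b" using bezout_nat by blast
  then have ij': "a * i = b * j + 1" using assms(3) by simp
  have "x = x ^ (q ^ (a * i))" using iter_fix[OF assms(1)] by simp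
  also have "\<dots> = (x ^ (q ^ (b * j))) ^ q"
  proof -
    have e: "q ^ (a * i) = q ^ (b * j) * q" by (simp add: ij')
    show ?thesis unfolding e by (rule power_mult)
  qed
  also have "\<dots> = x ^ q" using iter_fix[OF assms(2)] by simp
  finally show ?thesis by simp
qed

lemma pow_one_coprime:
  fixes x :: "'a::field"
  assumes "x ^ a = 1" "x ^ b = 1" "coprime a b"
  shows "x = 1"
proof (cases "a = 0")
  case True
  then have "b = 1" using assms(3) by simp
  then show ?thesis using assms(2) by simp
next
  case False
  then obtain i j where ij: "a * i = b * j + gcd a b" using bezout_nat by blast
  then have ij': "a * i = b * j + 1" using assms(3) by simp
  have "1 = (x ^ a) ^ i" using assms by simp
  also have "\<dots> = (x ^ b) ^ j * x" by (simp add: ij' flip: power_mult power_Suc2)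
  also have "\<dots> = x" using assms by simp
  finally show ?thesis by simp
qed

lemma geom_nat:
  fixes q :: nat
  assumes "q \<ge> 1"
  shows "(q - 1) * (\<Sum>i<n. q ^ i) = q ^ n - 1"
proof (induction n)
  case (Suc n)
  have "q ^ n \<ge> 1" using assms by simp
  have "(q - 1) * (\<Sum>i<Suc n. q ^ i) = (q ^ n - 1) + (q - 1) * q ^ n"
    using Suc by (simp add: algebra_simps)
  also have "\<dots> = q ^ Suc n - 1" using assms \<open>q ^ n \<ge> 1\<close>
    by (simp add: algebra_simps diff_mult_distrib)
  finally show ?case .
qed simp


lemma ratio_eq:
  fixes y :: "'a::field" and \<delta> :: 'a
  assumes "y \<noteq> 0" "s = q ^ r" "q > 0"
  shows "(y ^ q + \<delta> * y ^ (q ^ (2 * r + 1))) / y ^ (q ^ (r + 1))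
     = 1 / ((y^q) ^ (s - 1)) + \<delta> * ((y^q) ^ (s - 1)) ^ s"
proof -
  define Y where "Y = y ^ q"
  define A where "A = Y ^ (s - 1)"
  have Y0: "Y \<noteq> 0" using assms by (simp add: Y_def)
  have A0: "A \<noteq> 0" using Y0 by (simp add: A_def)
  have s1: "s \<ge> 1" using assms by simp
  have e1: "y ^ (q ^ (2 * r + 1)) = Y ^ (s * s)"
    unfolding Y_def assms(2) by (simp add: power_add power_mult_distrib mult_2 flip: power_mult)
  have e2: "y ^ (q ^ (r + 1)) = Y ^ s"
    unfolding Y_def assms(2) by (simp add: flip: power_mult)
  have e3: "Y ^ s = Y * A" unfolding A_def using s1
    by (metis Suc_diff_le diff_Suc_1 power_Suc)
  have e4: "Y ^ (s * s) = Y ^ s * A ^ s" by (simp add: power_mult e3 power_mult_distrib)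
  have "(y ^ q + \<delta> * y ^ (q ^ (2 * r + 1))) / y ^ (q ^ (r + 1)) = (Y + \<delta> * (Y ^ s * A ^ s)) / Y ^ s"
    unfolding e1 e2 e4 by (simp add: Y_def)
  also have "\<dots> = 1 / A + \<delta> * A ^ s" using Y0 A0 by (simp add: e3 field_simps)
  finally show ?thesis by (simp add: A_def Y_def)
qed


lemma scat:
  fixes \<delta> :: "'a::field"
  assumes CH: "prime CHAR('a)" and qk: "q = CHAR('a) ^ k" and k0: "k > 0"
    and dq: "\<delta> ^ q = \<delta>" and dN: "\<delta> ^ N \<noteq> 1" and N0: "N > 0"
    and cop: "coprime r N" and r0: "r > 0"
  shows "scattered_over q (r + 1) (\<lambda>x::'a. x ^ q + \<delta> * x ^ (q ^ (2 * r + 1))) N"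
  unfolding scattered_over_def
proof (intro ballI impI)
  fix y z :: 'a
  assume yF: "y \<in> Fq q N - {0}" and zF: "z \<in> Fq q N - {0}"
  assume eq: "(y ^ q + \<delta> * y ^ (q ^ (2 * r + 1))) / y ^ q ^ (r + 1) =
              (z ^ q + \<delta> * z ^ (q ^ (2 * r + 1))) / z ^ q ^ (r + 1)"
  have y0: "y \<noteq> 0" and yN: "y ^ (q ^ N) = y" using yF by (auto simp: Fq_def)
  have z0: "z \<noteq> 0" and zN: "z ^ (q ^ N) = z" using zF by (auto simp: Fq_def)
  have "CHAR('a) \<ge> 2" using CH prime_ge_2_nat by blast
  then have q2: "q \<ge> 2" using qk k0
    by (metis One_nat_def Suc_1 Suc_le_eq le_less_trans less_imp_le_nat one_less_power)
  define s where "s = q ^ r"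
  have s2: "s \<ge> 2" unfolding s_def using q2 r0
    by (metis One_nat_def Suc_1 Suc_le_eq le_less_trans less_imp_le_nat one_less_power)
  define Y where "Y = y ^ q"
  define Z where "Z = z ^ q"
  define A where "A = Y ^ (s - 1)"
  define B where "B = Z ^ (s - 1)"
  have Y0: "Y \<noteq> 0" "Z \<noteq> 0" using y0 z0 by (auto simp: Y_def Z_def)
  have A0: "A \<noteq> 0" "B \<noteq> 0" using Y0 by (auto simp: A_def B_def)
  have YN: "Y ^ (q ^ N) = Y" unfolding Y_def
    by (metis yN mult.commute power_mult)
  have ZN: "Z ^ (q ^ N) = Z" unfolding Z_def
    by (metis zN mult.commute power_mult)
  have AN: "A ^ (q ^ N) = A" unfolding A_def
    by (metis YN mult.commute power_mult)
  have BN: "B ^ (q ^ N) = B" unfolding B_def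
    by (metis ZN mult.commute power_mult)
  have eq2: "1 / A + \<delta> * A ^ s = 1 / B + \<delta> * B ^ s"
    using eq ratio_eq[OF y0 s_def, of \<delta>] ratio_eq[OF z0 s_def, of \<delta>] q2
    by (simp add: A_def B_def Y_def Z_def)
  show "y / z \<in> Fq q 1"
  proof (cases "A = B")
    case True
    define u where "u = Y / Z"
    have "u ^ (s - 1) = 1" using True A0 unfolding u_def A_def B_def by (simp add: power_divide)
    moreover have "s = Suc (s - 1)" using s2 by simp
    ultimately have "u ^ s = u" by (metis mult_1 power_Suc2)
    then have us: "u ^ (q ^ r) = u" by (simp add: s_def)
    have uN: "u ^ (q ^ N) = u" unfolding u_def using YN ZN by (simp add: power_divide)
    have uq: "u ^ q = u" using coprime_fix[OF us uN cop] .
    define v where "v = y / z"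
    have vu: "v ^ q = u" unfolding u_def v_def Y_def Z_def by (simp add: power_divide)
    have vN: "v ^ (q ^ N) = v" unfolding v_def using yN zN by (simp add: power_divide)
    have vj: "v ^ (q ^ Suc j) = v ^ q" for j
    proof (induction j)
      case (Suc j)
      have "v ^ (q ^ Suc (Suc j)) = (v ^ (q ^ Suc j)) ^ q"
        by (metis power_Suc2 power_mult)
      then show ?case using Suc vu uq by simp
    qed simp
    have "v ^ q = v" using vj[of "N - 1"] vN N0 by simp
    then show ?thesis by (simp add: Fq_def v_def)
  next
    case False
    have BA: "B - A \<noteq> 0" using False by simp
    have fr: "(B - A) ^ s = B ^ s - A ^ s" unfolding s_def by (rule frob_diff[OF CH qk])
    have "B - A = \<delta> * A * B * (B ^ s - A ^ s)"
      using eq2 A0 by (simp add: field_simps)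
    also have "\<dots> = \<delta> * A * B * (B - A) ^ s" by (simp add: fr)
    also have "\<dots> = (\<delta> * A * B * (B - A) ^ (s - 1)) * (B - A)"
    proof -
      have "s = Suc (s - 1)" using s2 by simp
      then have "(B - A) ^ s = (B - A) ^ (s - 1) * (B - A)" by (metis power_Suc2)
      then show ?thesis by (simp add: mult.assoc)
    qed
    finally have one: "\<delta> * (A * B * (B - A) ^ (s - 1)) = 1" using BA
      by (simp add: mult.assoc)
    define W where "W = Y * Z * (B - A)"
    have W0: "W \<noteq> 0" using Y0 BA by (simp add: W_def)
    have Ws: "W ^ (s - 1) = A * B * (B - A) ^ (s - 1)"
      by (simp add: W_def A_def B_def power_mult_distrib)
    have WN: "W ^ (q ^ N) = W"
      using frob_diff[OF CH qk, of B A N] YN ZN AN BN by (simp add: W_def power_mult_distrib)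
    have W1: "W ^ (q ^ N - 1) = 1"
    proof -
      have "q ^ N \<ge> 1" using q2 by simp
      then have "W ^ (q ^ N) = W ^ (q ^ N - 1) * W"
        by (metis Suc_diff_le diff_Suc_1 power_Suc2)
      then show ?thesis using WN W0 by simp
    qed
    define E where "E = (\<Sum>i<N. q ^ i)"
    define M where "M = (\<Sum>i<r. q ^ i)"
    have dE: "\<delta> ^ E = \<delta> ^ N"
    proof -
      have "\<delta> ^ E = (\<Prod>i<N. \<delta> ^ (q ^ i))" unfolding E_def by (rule power_sum)
      also have "\<dots> = (\<Prod>i<N. \<delta>)"
        using iter_fix[of \<delta> q 1] dq by simp
      finally show ?thesis by simp
    qed
    have sE: "(s - 1) * E = (q ^ N - 1) * M"
      using geom_nat[of q r] geom_nat[of q N] q2 unfolding s_def E_def M_def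
      by (metis le_trans mult.assoc mult.commute one_le_numeral)
    have "1 = (\<delta> * W ^ (s - 1)) ^ E" using one Ws by simp
    also have "\<dots> = \<delta> ^ E * W ^ ((s - 1) * E)" by (simp add: power_mult_distrib power_mult)
    also have "\<dots> = \<delta> ^ N"
    proof -
      have "W ^ ((s - 1) * E) = (W ^ (q ^ N - 1)) ^ M" unfolding sE by (rule power_mult)
      then have "W ^ ((s - 1) * E) = 1" using W1 by simp
      then show ?thesis using dE by simp
    qed
    finally show ?thesis using dN by simp
  qed
qed


lemma cop_aux: "coprime (a::nat) (1 + j * (c * a))"
proof -
  have "gcd a ((j * c) * a + 1) = gcd a 1" by (rule gcd_add_mult)
  then show ?thesis by (simp add: coprime_iff_gcd_eq_1 ac_simps)
qed

theorem mainTheorem14: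
  fixes p k q n r :: nat and \<delta> :: "'a::alg_closed_field"
  assumes "prime p" and "odd p" and "CHAR('a) = p"
    and "k > 0" and "q = p ^ k"
    and "odd n" and "n > 3" and "coprime n (q - 1)"
    and "\<delta> \<in> Fq q n" and "\<delta> \<noteq> 0" and "\<delta> \<noteq> 1" and "\<delta> ^ (q - 1) = 1"
    and "0 < r" and "r < n" and "coprime r n"
  shows "exceptional_scattered q n (r + 1) (\<lambda>x::'a. x ^ q + \<delta> * x ^ (q ^ (2 * r + 1)))"
proof -
  have CH: "prime CHAR('a)" using assms by simp
  have qk: "q = CHAR('a) ^ k" using assms by simp
  have "p \<ge> 2" using assms prime_ge_2_nat by blast
  then have q2: "q \<ge> 2" using assms
    by (metis One_nat_def Suc_1 Suc_le_eq le_less_trans less_imp_le_nat one_less_power)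
  have dq: "\<delta> ^ q = \<delta>"
  proof -
    have "q = Suc (q - 1)" using q2 by simp
    then have "\<delta> ^ q = \<delta> ^ (q - 1) * \<delta>" by (metis power_Suc2)
    then show ?thesis using assms by simp
  qed
  define f where "f j = 1 + j * ((q - 1) * r)" for j
  have pos: "(q - 1) * r > 0" using q2 assms by simp
  have inj: "inj f" unfolding f_def inj_def using pos by simp
  have sub: "range f \<subseteq> {m::nat. m > 0 \<and> scattered_over q (r + 1) (\<lambda>x::'a. x ^ q + \<delta> * x ^ (q ^ (2 * r + 1))) (m * n)}"
  proof clarify
    fix j
    have m0: "f j > 0" by (simp add: f_def)
    have c1: "coprime r (f j * n)" using cop_aux[of r j "q - 1"] assms
      unfolding coprime_mult_right_iff by (simp add: f_def)
    have c2: "coprime (f j) (q - 1)"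
      using cop_aux[of "q - 1" j r] by (simp add: f_def ac_simps coprime_commute)
    have c3: "coprime (f j * n) (q - 1)" using c2 assms by simp
    have dN: "\<delta> ^ (f j * n) \<noteq> 1"
      using pow_one_coprime[of \<delta> "f j * n" "q - 1"] c3 assms by auto
    show "0 < f j \<and> scattered_over q (r + 1) (\<lambda>x::'a. x ^ q + \<delta> * x ^ (q ^ (2 * r + 1))) (f j * n)"
      using m0 scat[OF CH qk assms(4) dq dN _ c1 assms(13)] assms by simp
  qed
  show ?thesis unfolding exceptional_scattered_def
    using infinite_super[OF sub range_inj_infinite[OF inj]] .
qed

end
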